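(* Under the hypotheses and notation of the setting below, the constant \[K=\prod_{j=1}^N\Big(\frac{au_j+b}{eu_j+f}\Big)^j\,\mathrm{Tr}\big[Q\,\mathcal{A}_N^{M-N}\mathcal{C}_N^{(N)}\cdots\mathcal{C}_N^{(1)}\big]\] equals \[K=\prod_{j=1}^N\frac{(1-t)cu_j(au_j+b)^M}{eu_j+f}\prod_{1\le j<k\le N}\frac{tu_j-u_k}{u_j-u_k}.\]
   Context: Fix complex parameters $t,a,b,c,d,e,f$, all nonzero, with $t\neq1$, satisfying $cd+af=0$ and $tcd+be=0$; let $1\le N\le M$ and let $u_1,\dots,u_N$ be pairwise distinct with $au_j+b\neq0$, $eu_j+f\neq0$, $tu_j\neq u_k$ ($j\neq k$). $X\otimes Y$ denotes the Kronecker product $(X_{ik}Y)_{i,k}$. The $2^n\times2^n$ matrices $\mathcal{A}_n,\mathcal{C}_n$ are defined by $\mathcal{A}_1=\mathrm{diag}(au_1+b,eu_1+f)$, $\mathcal{C}_1=\begin{pmatrix}0&(1-t)cu_1\\0&0\end{pmatrix}$, $\mathcal{A}_{n+1}=\mathrm{diag}(au_{n+1}+b,eu_{n+1}+f)\otimes\mathcal{A}_n+\begin{pmatrix}0&0\\(1-t)d&0\end{pmatrix}\otimes\mathcal{C}_n$, $\mathcal{C}_{n+1}=\begin{pmatrix}0&(1-t)cu_{n+1}\\0&0\end{pmatrix}\otimes\mathcal{A}_n+\mathrm{diag}(atu_{n+1}+b,eu_{n+1}+tf)\otimes\mathcal{C}_n$. The matrices $\mathcal{C}_N^{(1)},\dots,\mathcal{C}_N^{(N)}$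 are any matrices with $\sum_j\mathcal{C}_N^{(j)}=\mathcal{C}_N$ such that for all $j$ and $k\neq j$: $\mathcal{C}_N^{(j)}\mathcal{A}_N=\frac{eu_j+f}{au_j+b}\mathcal{A}_N\mathcal{C}_N^{(j)}$, $(\mathcal{C}_N^{(j)})^2=0$, $\mathcal{C}_N^{(j)}\mathcal{C}_N^{(k)}=\frac{(eu_j+f)(au_k+b)(u_j-tu_k)}{(au_j+b)(eu_k+f)(tu_j-u_k)}\mathcal{C}_N^{(k)}\mathcal{C}_N^{(j)}$. Rows/columns of $2^N\times2^N$ matrices are indexed by $\{0,1\}^N$ consistent with the Kronecker structure; $Q$ is the matrix with single entry $1$ at row $(1,\dots,1)$, column $(0,\dots,0)$. *)

theory Defs
  imports Complex_Main "Jordan_Normal_Form.Matrix"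
begin

text \<open>Kronecker product: (X \<otimes> Y) has entries X_(i,k) * Y, the first factor indexing
  the most significant block.\<close>
definition kron :: "complex mat \<Rightarrow> complex mat \<Rightarrow> complex mat" where
  "kron X Y = mat (dim_row X * dim_row Y) (dim_col X * dim_col Y)
     (\<lambda>(i, j). X $$ (i div dim_row Y, j div dim_col Y) * Y $$ (i mod dim_row Y, j mod dim_col Y))"

definition m2 :: "complex \<Rightarrow> complex \<Rightarrow> complex \<Rightarrow> complex \<Rightarrow> complex mat" where
  "m2 p q r s = mat_of_rows_list 2 [[p, q], [r, s]]"

text \<open>The pair (A_n, C_n); parameters t a b c d e f and spectral parameters u_1, u_2, ...
  The case n = 0 is a dummy value and never used (N \<ge> 1).\<close>
fun ACmat :: "complex \<Rightarrow> complex \<Rightarrow> complex \<Rightarrow> complex \<Rightarrow> complex \<Rightarrow> complex \<Rightarrow> complex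
    \<Rightarrow> (nat \<Rightarrow> complex) \<Rightarrow> nat \<Rightarrow> complex mat \<times> complex mat" where
  "ACmat t a b c d e f u 0 = (1\<^sub>m 1, 0\<^sub>m 1 1)"
| "ACmat t a b c d e f u (Suc 0) =
     (m2 (a * u 1 + b) 0 0 (e * u 1 + f), m2 0 ((1 - t) * c * u 1) 0 0)"
| "ACmat t a b c d e f u (Suc (Suc n)) =
     (let A = fst (ACmat t a b c d e f u (Suc n)); C = snd (ACmat t a b c d e f u (Suc n)) in
      (kron (m2 (a * u (Suc (Suc n)) + b) 0 0 (e * u (Suc (Suc n)) + f)) A
         + kron (m2 0 0 ((1 - t) * d) 0) C,
       kron (m2 0 ((1 - t) * c * u (Suc (Suc n))) 0 0) A
         + kron (m2 (a * t * u (Suc (Suc n)) + b) 0 0 (e * u (Suc (Suc n)) + t * f)) C))"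

definition Amat where "Amat t a b c d e f u n = fst (ACmat t a b c d e f u n)"
definition Cmat where "Cmat t a b c d e f u n = snd (ACmat t a b c d e f u n)"

fun msum :: "nat \<Rightarrow> (nat \<Rightarrow> complex mat) \<Rightarrow> nat \<Rightarrow> complex mat" where
  "msum dm Cs 0 = 0\<^sub>m dm dm"
| "msum dm Cs (Suc n) = msum dm Cs n + Cs (Suc n)"

fun mprodrev :: "nat \<Rightarrow> (nat \<Rightarrow> complex mat) \<Rightarrow> nat \<Rightarrow> complex mat" where
  "mprodrev dm Cs 0 = 1\<^sub>m dm"
| "mprodrev dm Cs (Suc n) = Cs (Suc n) * mprodrev dm Cs n"

definition mtrace :: "complex mat \<Rightarrow> complex" where
  "mtrace X = (\<Sum>i<dim_row X. X $$ (i, i))"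

text \<open>Q: single entry 1 at row (1,...,1) = 2^N - 1 and column (0,...,0) = 0.\<close>
definition Qmat :: "nat \<Rightarrow> complex mat" where
  "Qmat N = mat (2 ^ N) (2 ^ N) (\<lambda>(i, j). if i = 2 ^ N - 1 \<and> j = 0 then 1 else 0)"

end

theory Submission imports Defs begin

definition mv :: "complex mat \<Rightarrow> (nat \<Rightarrow> complex) \<Rightarrow> nat \<Rightarrow> complex" where
  "mv X v i = (\<Sum>l<dim_col X. X $$ (i, l) * v l)"

definition ev :: "nat \<Rightarrow> nat \<Rightarrow> complex" where
  "ev k i = (if i = k then 1 else 0)"

lemma m2_dims[simp]: "dim_row (m2 p q r s) = 2" "dim_col (m2 p q r s) = 2"
  by (auto simp: m2_def mat_of_rows_list_def)

lemma m2_index[simp]: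
  "m2 p q r s $$ (0,0) = p" "m2 p q r s $$ (0,1) = q" "m2 p q r s $$ (1,0) = r" "m2 p q r s $$ (1,1) = s"
  by (auto simp: m2_def mat_of_rows_list_def)

lemma m2_index'[simp]:
  "m2 p q r s $$ (0,Suc 0) = q" "m2 p q r s $$ (Suc 0,0) = r" "m2 p q r s $$ (Suc 0,Suc 0) = s"
  by (auto simp: m2_def mat_of_rows_list_def)

lemma kron_dims[simp]: "dim_row (kron X Y) = dim_row X * dim_row Y"
  "dim_col (kron X Y) = dim_col X * dim_col Y"
  by (auto simp: kron_def)

lemma kron_index: "i < dim_row X * dim_row Y \<Longrightarrow> j < dim_col X * dim_col Y \<Longrightarrow>
  kron X Y $$ (i,j) = X $$ (i div dim_row Y, j div dim_col Y) * Y $$ (i mod dim_row Y, j mod dim_col Y)"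
  by (simp add: kron_def)

lemma less2: "(i::nat) < 2 \<Longrightarrow> i = 0 \<or> i = 1" by auto

lemma sum_split_add: "(\<Sum>l<(D::nat) + n. g l) = (\<Sum>l<D. g l) + (\<Sum>l<n. g (D + l))"
  by (induction n) (auto simp: add.assoc)

lemma mv_cong: "(\<And>l. l < dim_col X \<Longrightarrow> v l = w l) \<Longrightarrow> mv X v i = mv X w i"
  unfolding mv_def by (rule sum.cong) auto

lemma mv_scale: "mv X (\<lambda>l. k * v l) i = k * mv X v i"
  unfolding mv_def by (simp add: sum_distrib_left algebra_simps)

lemma mv_add: "mv X (\<lambda>l. v l + w l) i = mv X v i + mv X w i"
  unfolding mv_def by (simp add: sum.distrib algebra_simps)

lemma mv_sum: "mv X (\<lambda>l. \<Sum>j\<in>J. g j l) i = (\<Sum>j\<in>J. mv X (g j) i)"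
  unfolding mv_def by (simp add: sum_distrib_left sum.swap[of _ J])

lemma mv_zero: "mv X (\<lambda>l. 0) i = 0"
  unfolding mv_def by simp

lemma mv_mat_add: "i < dim_row Y \<Longrightarrow> dim_col X = dim_col Y \<Longrightarrow> mv (X + Y) v i = mv X v i + mv Y v i"
  unfolding mv_def by (simp add: sum.distrib algebra_simps)

lemma mv_smult: "i < dim_row X \<Longrightarrow> mv (k \<cdot>\<^sub>m X) v i = k * mv X v i"
  unfolding mv_def by (simp add: sum_distrib_left algebra_simps)

lemma mv_mult: "i < dim_row X \<Longrightarrow> dim_col X = dim_row Y \<Longrightarrow> mv (X * Y) v i = mv X (mv Y v) i"
proof -
  assume i: "i < dim_row X" and d: "dim_col X = dim_row Y"
  have "mv (X * Y) v i = (\<Sum>l<dim_col Y. (\<Sum>k<dim_row Y. X $$ (i,k) * Y $$ (k,l)) * v l)"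
    unfolding mv_def using i d
    by (intro sum.cong) (auto simp: scalar_prod_def atLeast0LessThan)
  also have "\<dots> = (\<Sum>k<dim_row Y. X $$ (i,k) * (\<Sum>l<dim_col Y. Y $$ (k,l) * v l))"
    by (simp add: sum_distrib_left sum_distrib_right sum.swap[of _ "{..<dim_row Y}"] algebra_simps)
  also have "\<dots> = mv X (mv Y v) i" unfolding mv_def using d by simp
  finally show ?thesis .
qed

lemma mv_kron:
  assumes X: "X \<in> carrier_mat 2 2" and Y: "Y \<in> carrier_mat D D" and i: "i < 2 * D"
  shows "mv (kron X Y) v i = X $$ (i div D, 0) * mv Y v (i mod D)
           + X $$ (i div D, 1) * mv Y (\<lambda>l. v (D + l)) (i mod D)"
proof -
  have D: "D > 0" using i by auto
  have "mv (kron X Y) v i = (\<Sum>l<D + D. X $$ (i div D, l div D) * Y $$ (i mod D, l mod D) * v l)"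
    unfolding mv_def using X Y i by (intro sum.cong) (auto simp: kron_index mult_2)
  also have "\<dots> = (\<Sum>l<D. X $$ (i div D, 0) * Y $$ (i mod D, l) * v l)
       + (\<Sum>l<D. X $$ (i div D, 1) * Y $$ (i mod D, l) * v (D + l))"
    unfolding sum_split_add using D by (intro arg_cong2[where f="(+)"] sum.cong) auto
  also have "\<dots> = X $$ (i div D, 0) * mv Y v (i mod D) + X $$ (i div D, 1) * mv Y (\<lambda>l. v (D + l)) (i mod D)"
    unfolding mv_def using Y by (simp add: sum_distrib_left algebra_simps)
  finally show ?thesis .
qed


lemma mv_diff: "mv X (\<lambda>l. v l - w l) i = mv X v i - mv X w i"
  unfolding mv_def by (simp add: sum_subtractf algebra_simps)

lemma eig_indep:
  assumes "finite J" and "inj_on \<mu> J" and "dim_col X = D"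
    and "\<forall>j\<in>J. \<forall>i<D. mv X (z j) i = \<mu> j * z j i"
    and "\<forall>i<D. (\<Sum>j\<in>J. z j i) = 0"
  shows "\<forall>j\<in>J. \<forall>i<D. z j i = 0"
  using assms
proof (induction J arbitrary: z rule: finite_induct)
  case empty
  then show ?case by simp
next
  case (insert a J)
  define z' where "z' j i = (\<mu> j - \<mu> a) * z j i" for j i
  have eig': "\<forall>j\<in>J. \<forall>i<D. mv X (z' j) i = \<mu> j * z' j i"
    using insert.prems(3) unfolding z'_def by (simp add: mv_scale)
  have s0: "(\<Sum>j\<in>J. z j i) = - z a i" if i: "i < D" for i
    using insert.prems(4) i insert.hyps by (simp add: add_eq_0_iff)
  have s1: "(\<Sum>j\<in>insert a J. \<mu> j * z j i) = 0" if i: "i < D" for i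
  proof -
    have "(\<Sum>j\<in>insert a J. \<mu> j * z j i) = (\<Sum>j\<in>insert a J. mv X (z j) i)"
      using insert.prems(3) i by (intro sum.cong) auto
    also have "\<dots> = mv X (\<lambda>l. \<Sum>j\<in>insert a J. z j l) i" by (simp add: mv_sum)
    also have "\<dots> = mv X (\<lambda>l. 0) i"
      using insert.prems(2,4) by (intro mv_cong) auto
    finally show ?thesis by (simp add: mv_zero)
  qed
  have sum': "\<forall>i<D. (\<Sum>j\<in>J. z' j i) = 0"
  proof (intro allI impI)
    fix i assume i: "i < D"
    have "(\<Sum>j\<in>J. z' j i) = (\<Sum>j\<in>J. \<mu> j * z j i) - \<mu> a * (\<Sum>j\<in>J. z j i)"
      unfolding z'_def by (simp add: algebra_simps sum_subtractf sum_distrib_left)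
    also have "(\<Sum>j\<in>J. \<mu> j * z j i) = - \<mu> a * z a i" using s1[OF i] insert.hyps by (simp add: add_eq_0_iff)
    finally show "(\<Sum>j\<in>J. z' j i) = 0" using s0[OF i] by simp
  qed
  have inj': "inj_on \<mu> J" using insert.prems(1) by auto
  have IH: "\<forall>j\<in>J. \<forall>i<D. z' j i = 0" using insert.IH[OF inj' insert.prems(2) eig' sum'] .
  have zJ: "\<forall>j\<in>J. \<forall>i<D. z j i = 0"
  proof (intro ballI allI impI)
    fix j i assume j: "j \<in> J" and i: "i < D"
    have "\<mu> j \<noteq> \<mu> a" using insert.prems(1) insert.hyps j by (auto simp: inj_on_def)
    thus "z j i = 0" using IH j i unfolding z'_def by auto
  qed
  have "\<forall>i<D. z a i = 0" using s0 zJ by auto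
  thus ?case using zJ by auto
qed

lemma mv_one: "i < D \<Longrightarrow> mv (1\<^sub>m D) v i = v i"
proof -
  assume i: "i < D"
  have "mv (1\<^sub>m D) v i = (\<Sum>l\<in>{..<D}. if i = l then v l else 0)"
    unfolding mv_def using i by (intro sum.cong) auto
  thus ?thesis using i by simp
qed

lemma mv_ev: "k < dim_col X \<Longrightarrow> mv X (ev k) i = X $$ (i, k)"
proof -
  assume k: "k < dim_col X"
  have "mv X (ev k) i = (\<Sum>l\<in>{..<dim_col X}. if k = l then X $$ (i, l) else 0)"
    unfolding mv_def ev_def by (intro sum.cong) auto
  thus ?thesis using k by simp
qed

lemma msum_mv:
  assumes "\<forall>j\<in>{1..N}. Cs j \<in> carrier_mat D D" and "k \<le> N"
  shows "msum D Cs k \<in> carrier_mat D D \<and> (\<forall>i<D. mv (msum D Cs k) v i = (\<Sum>j\<in>{1..k}. mv (Cs j) v i))"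
  using assms(2)
proof (induction k)
  case 0
  then show ?case by (simp add: mv_def)
next
  case (Suc k)
  have C: "Cs (Suc k) \<in> carrier_mat D D" using assms(1) Suc.prems by auto
  from Suc.IH Suc.prems have IH: "msum D Cs k \<in> carrier_mat D D"
      "\<forall>i<D. mv (msum D Cs k) v i = (\<Sum>j\<in>{1..k}. mv (Cs j) v i)" by auto
  show ?case
  proof (intro conjI allI impI)
    show "msum D Cs (Suc k) \<in> carrier_mat D D" using IH C by auto
    fix i assume i: "i < D"
    have "mv (msum D Cs (Suc k)) v i = mv (msum D Cs k) v i + mv (Cs (Suc k)) v i"
      using IH C i by (simp add: mv_mat_add)
    thus "mv (msum D Cs (Suc k)) v i = (\<Sum>j\<in>{1..Suc k}. mv (Cs j) v i)"
      using IH i by simp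
  qed
qed

lemma mprodrev_carrier:
  assumes "\<forall>j\<in>{1..N}. Cs j \<in> carrier_mat D D" and "k \<le> N"
  shows "mprodrev D Cs k \<in> carrier_mat D D"
  using assms(2)
proof (induction k)
  case 0
  then show ?case by simp
next
  case (Suc k)
  have C: "Cs (Suc k) \<in> carrier_mat D D" using assms(1) Suc.prems by auto
  then show ?case using Suc by auto
qed

lemma trace_Q:
  fixes B X :: "complex mat"
  assumes B: "B \<in> carrier_mat (2^N) (2^N)" and X: "X \<in> carrier_mat (2^N) (2^N)"
  shows "mtrace (Qmat N * B * X) = (\<Sum>r<2^N. B $$ (0, r) * X $$ (r, 2^N - 1))"
proof -
  have QB: "(Qmat N * B) $$ (i, l) = (if i = 2^N - 1 then B $$ (0, l) else 0)"
    if i: "i < 2^N" and l: "l < 2^N" for i l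
  proof -
    have "(Qmat N * B) $$ (i, l) = (\<Sum>r\<in>{0..<(2::nat)^N}. (if i = 2^N - 1 \<and> r = 0 then 1 else 0) * B $$ (r, l))"
      using i l B by (simp add: scalar_prod_def Qmat_def)
    also have "\<dots> = (\<Sum>r\<in>{0..<(2::nat)^N}. if r = 0 then (if i = 2^N - 1 then B $$ (0, l) else 0) else 0)"
      by (intro sum.cong) auto
    finally show ?thesis by simp
  qed
  have QBX: "(Qmat N * B * X) $$ (i, i) = (if i = 2^N - 1 then (\<Sum>r<2^N. B $$ (0, r) * X $$ (r, 2^N - 1)) else 0)"
    if i: "i < 2^N" for i
  proof -
    have "(Qmat N * B * X) $$ (i, i) = (\<Sum>r\<in>{0..<(2::nat)^N}. (Qmat N * B) $$ (i, r) * X $$ (r, i))"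
      using i B X by (simp add: scalar_prod_def Qmat_def)
    also have "\<dots> = (\<Sum>r\<in>{0..<(2::nat)^N}. if i = 2^N - 1 then B $$ (0, r) * X $$ (r, 2^N - 1) else 0)"
      using i QB by (intro sum.cong) auto
    finally show ?thesis by (simp add: lessThan_atLeast0)
  qed
  have "mtrace (Qmat N * B * X) = (\<Sum>i<2^N. (Qmat N * B * X) $$ (i, i))"
    unfolding mtrace_def by (simp add: Qmat_def)
  also have "\<dots> = (\<Sum>i<(2::nat)^N. if i = 2^N - 1 then (\<Sum>r<2^N. B $$ (0, r) * X $$ (r, 2^N - 1)) else 0)"
    using QBX by (intro sum.cong) auto
  also have "\<dots> = (\<Sum>r<2^N. B $$ (0, r) * X $$ (r, 2^N - 1))" by simp
  finally show ?thesis .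
qed

context
  fixes t a b c d e f :: complex and u :: "nat \<Rightarrow> complex"
begin

abbreviation "AA n \<equiv> Amat t a b c d e f u n"
abbreviation "CC n \<equiv> Cmat t a b c d e f u n"

lemma AC_Suc_conj:
  "AA (Suc n) = kron (m2 (a * u (Suc n) + b) 0 0 (e * u (Suc n) + f)) (AA n)
      + kron (m2 0 0 ((1 - t) * d) 0) (CC n) \<and>
    CC (Suc n) = kron (m2 0 ((1 - t) * c * u (Suc n)) 0 0) (AA n)
      + kron (m2 (a * t * u (Suc n) + b) 0 0 (e * u (Suc n) + t * f)) (CC n)"
proof (cases n)
  case 0
  have k: "kron X (1\<^sub>m (Suc 0)) + kron Y (0\<^sub>m (Suc 0) (Suc 0)) = X"
    if "X \<in> carrier_mat 2 2" "Y \<in> carrier_mat 2 2" for X Y :: "complex mat"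
    using that by (intro eq_matI) (auto simp: kron_index)
  have c2: "m2 p q r s \<in> carrier_mat 2 2" for p q r s by (intro carrier_matI) simp_all
  show ?thesis unfolding 0 Amat_def Cmat_def
    by (simp only: ACmat.simps fst_conv snd_conv k c2 simp_thms One_nat_def)
next
  case (Suc m)
  show ?thesis unfolding Suc Amat_def Cmat_def by (simp add: Let_def)
qed

lemmas AC_Suc = AC_Suc_conj[THEN conjunct1] AC_Suc_conj[THEN conjunct2]

lemma AC_carrier: "AA n \<in> carrier_mat (2^n) (2^n) \<and> CC n \<in> carrier_mat (2^n) (2^n)"
proof (induction n)
  case 0
  then show ?case by (simp add: Amat_def Cmat_def)
next
  case (Suc n)
  then show ?case unfolding AC_Suc by (intro conjI carrier_matI) (auto simp: power_Suc)
qed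

lemma AA_carrier: "AA n \<in> carrier_mat (2^n) (2^n)" and CC_carrier: "CC n \<in> carrier_mat (2^n) (2^n)"
  using AC_carrier by auto

lemma AA_dims[simp]: "dim_row (AA n) = 2^n" "dim_col (AA n) = 2^n"
  and CC_dims[simp]: "dim_row (CC n) = 2^n" "dim_col (CC n) = 2^n"
  using AA_carrier CC_carrier by auto

lemma div_mod_block: "i < 2 * (D::nat) \<Longrightarrow> (i < D \<longrightarrow> i div D = 0 \<and> i mod D = i) \<and>
  (\<not> i < D \<longrightarrow> i div D = 1 \<and> i mod D = i - D)"
  by (auto simp: div_if mod_if)

lemma c2: "m2 p q r s \<in> carrier_mat 2 2" by (intro carrier_matI) simp_all

lemma mvA_Suc: assumes i: "i < 2 * 2^n"
  shows "mv (AA (Suc n)) v i = (if i < 2^n then (a * u (Suc n) + b) * mv (AA n) v i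
     else (1 - t) * d * mv (CC n) v (i - 2^n) + (e * u (Suc n) + f) * mv (AA n) (\<lambda>l. v (2^n + l)) (i - 2^n))"
proof -
  have "mv (AA (Suc n)) v i = mv (kron (m2 (a * u (Suc n) + b) 0 0 (e * u (Suc n) + f)) (AA n)) v i
      + mv (kron (m2 0 0 ((1 - t) * d) 0) (CC n)) v i"
    unfolding AC_Suc(1) using i by (intro mv_mat_add) auto
  also have "\<dots> = ((m2 (a * u (Suc n) + b) 0 0 (e * u (Suc n) + f)) $$ (i div 2^n, 0) * mv (AA n) v (i mod 2^n)
           + (m2 (a * u (Suc n) + b) 0 0 (e * u (Suc n) + f)) $$ (i div 2^n, 1) * mv (AA n) (\<lambda>l. v (2^n + l)) (i mod 2^n))
      + ((m2 0 0 ((1 - t) * d) 0) $$ (i div 2^n, 0) * mv (CC n) v (i mod 2^n)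
           + (m2 0 0 ((1 - t) * d) 0) $$ (i div 2^n, 1) * mv (CC n) (\<lambda>l. v (2^n + l)) (i mod 2^n))"
    by (subst mv_kron[OF c2 AA_carrier i], subst mv_kron[OF c2 CC_carrier i], rule refl)
  finally show ?thesis using i div_mod_block[OF i] by auto
qed

lemma mvC_Suc: assumes i: "i < 2 * 2^n"
  shows "mv (CC (Suc n)) v i = (if i < 2^n then (a * t * u (Suc n) + b) * mv (CC n) v i
        + (1 - t) * c * u (Suc n) * mv (AA n) (\<lambda>l. v (2^n + l)) i
     else (e * u (Suc n) + t * f) * mv (CC n) (\<lambda>l. v (2^n + l)) (i - 2^n))"
proof -
  have "mv (CC (Suc n)) v i = mv (kron (m2 0 ((1 - t) * c * u (Suc n)) 0 0) (AA n)) v i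
      + mv (kron (m2 (a * t * u (Suc n) + b) 0 0 (e * u (Suc n) + t * f)) (CC n)) v i"
    unfolding AC_Suc(2) using i by (intro mv_mat_add) auto
  also have "\<dots> = ((m2 0 ((1 - t) * c * u (Suc n)) 0 0) $$ (i div 2^n, 0) * mv (AA n) v (i mod 2^n)
           + (m2 0 ((1 - t) * c * u (Suc n)) 0 0) $$ (i div 2^n, 1) * mv (AA n) (\<lambda>l. v (2^n + l)) (i mod 2^n))
      + ((m2 (a * t * u (Suc n) + b) 0 0 (e * u (Suc n) + t * f)) $$ (i div 2^n, 0) * mv (CC n) v (i mod 2^n)
           + (m2 (a * t * u (Suc n) + b) 0 0 (e * u (Suc n) + t * f)) $$ (i div 2^n, 1) * mv (CC n) (\<lambda>l. v (2^n + l)) (i mod 2^n))"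
    by (subst mv_kron[OF c2 AA_carrier i], subst mv_kron[OF c2 CC_carrier i], rule refl)
  finally show ?thesis using i div_mod_block[OF i] by auto
qed

fun lam :: "nat \<Rightarrow> nat \<Rightarrow> complex" where
  "lam 0 m = 1"
| "lam (Suc n) m = (if m = 0 then (a * u (Suc n) + b) * lam n 0 else (e * u (Suc n) + f) * lam n (m - 1))"

definition idx :: "nat \<Rightarrow> nat \<Rightarrow> nat" where "idx n m = 2^n - 2^(n-m)"

lemma idx_Suc0: "idx (Suc n) 0 = 0" and idx_0: "idx n 0 = 0" by (simp_all add: idx_def)

lemma idx_SucSuc: "m \<le> n \<Longrightarrow> idx (Suc n) (Suc m) = 2^n + idx n m"
proof -
  assume "m \<le> n"
  have "(2::nat)^(n-m) \<le> 2^n" by (intro power_increasing) auto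
  thus ?thesis unfolding idx_def by simp
qed

lemma idx_less: "idx n m < 2^n" unfolding idx_def by (simp add: diff_less)

lemma mv_zero': "(\<And>l. l < dim_col X \<Longrightarrow> v l = 0) \<Longrightarrow> mv X v i = 0"
  unfolding mv_def by simp

lemma ev_high: "i < 2^n \<Longrightarrow> ev (2^n + k) i = 0" by (simp add: ev_def)
lemma ev_shift: "(\<lambda>l. ev (2^n + k) (2^n + l)) = ev k" by (auto simp: ev_def)
lemma ev_shift': "\<not> i < (2::nat)^n \<Longrightarrow> ev (2^n + k) i = ev k (i - 2^n)" by (auto simp: ev_def)

lemma C_e0: "i < 2^n \<Longrightarrow> mv (CC n) (ev 0) i = 0"
proof (induction n arbitrary: i)
  case 0
  then show ?case by (simp add: Cmat_def mv_def)
next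
  case (Suc n)
  have z: "(\<lambda>l. ev 0 (2^n + l)) = (\<lambda>l. 0)" by (auto simp: ev_def)
  show ?case using Suc.prems Suc.IH
    by (simp add: mvC_Suc z mv_zero)
qed

lemma A_eT: "m \<le> n \<Longrightarrow> i < 2^n \<Longrightarrow> mv (AA n) (ev (idx n m)) i = lam n m * ev (idx n m) i"
proof (induction n arbitrary: m i)
  case 0
  then show ?case by (simp add: Amat_def mv_def idx_def ev_def)
next
  case (Suc n)
  show ?case
  proof (cases m)
    case 0
    have z: "(\<lambda>l. ev 0 (2^n + l)) = (\<lambda>l. 0)" by (auto simp: ev_def)
    show ?thesis
    proof (cases "i < 2^n")
      case True
      thus ?thesis using Suc.prems Suc.IH[of 0 i]
        by (simp add: 0 idx_Suc0 idx_0 mvA_Suc)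
    next
      case False
      hence "i - 2^n < 2^n" "ev 0 i = 0" using Suc.prems by (auto simp: ev_def)
      thus ?thesis using False Suc.prems C_e0[of "i - 2^n" n]
        by (simp add: 0 idx_Suc0 idx_0 mvA_Suc z mv_zero)
    qed
  next
    case (Suc m')
    hence m': "m' \<le> n" using Suc.prems by simp
    show ?thesis
    proof (cases "i < 2^n")
      case True
      have "mv (AA n) (ev (2^n + idx n m')) i = 0"
        by (rule mv_zero') (simp add: ev_high)
      thus ?thesis using True Suc.prems unfolding Suc idx_SucSuc[OF m']
        by (simp add: mvA_Suc ev_high)
    next
      case False
      have "mv (CC n) (ev (2^n + idx n m')) (i - 2^n) = 0"
        by (rule mv_zero') (simp add: ev_high)
      moreover have "i - 2^n < 2^n" using Suc.prems by simp
      ultimately show ?thesis using False Suc.prems Suc.IH[OF m'] unfolding Suc idx_SucSuc[OF m']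
        by (simp add: mvA_Suc ev_shift ev_shift')
    qed
  qed
qed

definition sN :: "nat \<Rightarrow> nat \<Rightarrow> complex" where
  "sN N j = (1 - t) * d * ((1 - t) * c * u N) * (e * u j + f)
     / ((a * u N + b) * (e * u j + f) - (e * u N + f) * (a * u j + b))"

fun kap :: "nat \<Rightarrow> nat \<Rightarrow> complex" where
  "kap 0 m = 0"
| "kap (Suc n) m = (if m = Suc 0 then (1 - t) * c * u (Suc n) * lam n 0
     else (e * u (Suc n) + t * f - sN (Suc n) (Suc (Suc n) - m)) * kap n (m - 1))"

lemma sN_key:
  assumes "e * u j + f \<noteq> 0"
    and "(a * u N + b) * (e * u j + f) - (e * u N + f) * (a * u j + b) \<noteq> 0"
  shows "(1 - t) * d * ((1 - t) * c * u N) + (e * u N + f) * (sN N j * ((a * u j + b) / (e * u j + f)))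
       = (a * u N + b) * sN N j"
proof -
  have gen: "K + bN * (K * bj / (aN * bj - bN * aj) * (aj / bj)) = aN * (K * bj / (aN * bj - bN * aj))"
    if "bj \<noteq> 0" "aN * bj - bN * aj \<noteq> 0" for K bN bj aN aj :: complex
  proof -
    have "K + bN * (K * bj / (aN * bj - bN * aj) * (aj / bj)) = K + bN * K * aj / (aN * bj - bN * aj)"
      using that by (simp add: field_simps)
    also have "\<dots> = (K * (aN * bj - bN * aj) + bN * K * aj) / (aN * bj - bN * aj)"
      using that by (simp add: field_simps)
    also have "\<dots> = aN * (K * bj / (aN * bj - bN * aj))"
      by (simp add: algebra_simps)
    finally show ?thesis .
  qed
  show ?thesis unfolding sN_def by (rule gen[OF assms])
qed

lemma decomp:
  assumes "m \<le> n"
    and H: "\<forall>j\<in>{1..n}. a * u j + b \<noteq> 0 \<and> e * u j + f \<noteq> 0"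
    and Hd: "\<forall>j\<in>{1..n}. \<forall>k\<in>{1..n}. j \<noteq> k \<longrightarrow>
        (a * u k + b) * (e * u j + f) - (e * u k + f) * (a * u j + b) \<noteq> 0"
  shows "\<exists>Y. (\<forall>i<2^n. (\<Sum>j\<in>{n-m+1..n}. Y j i) = mv (CC n) (ev (idx n m)) i)
     \<and> (\<forall>j\<in>{n-m+1..n}. \<forall>i<2^n. mv (AA n) (Y j) i = lam n m * (a * u j + b) / (e * u j + f) * Y j i)
     \<and> (1 \<le> m \<longrightarrow> (\<forall>i<2^n. Y (n-m+1) i = kap n m * ev (idx n (m-1)) i))"
  using assms
proof (induction n arbitrary: m)
  case 0
  then show ?case using C_e0[of _ 0] by (auto simp: idx_0)
next
  case (Suc n)
  show ?case
  proof (cases m)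
    case 0
    then show ?thesis using C_e0[of _ "Suc n"] by (auto simp: idx_0)
  next
    case (Suc m')
    have m': "m' \<le> n" using Suc.prems Suc by simp
    have H': "\<forall>j\<in>{1..n}. a * u j + b \<noteq> 0 \<and> e * u j + f \<noteq> 0" using Suc.prems by auto
    have Hd': "\<forall>j\<in>{1..n}. \<forall>k\<in>{1..n}. j \<noteq> k \<longrightarrow>
        (a * u k + b) * (e * u j + f) - (e * u k + f) * (a * u j + b) \<noteq> 0" using Suc.prems by auto
    obtain Y' where Y'sum: "\<forall>i<2^n. (\<Sum>j\<in>{n-m'+1..n}. Y' j i) = mv (CC n) (ev (idx n m')) i"
      and Y'eig: "\<forall>j\<in>{n-m'+1..n}. \<forall>i<2^n. mv (AA n) (Y' j) i = lam n m' * (a * u j + b) / (e * u j + f) * Y' j i"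
      and Y'kap: "1 \<le> m' \<longrightarrow> (\<forall>i<2^n. Y' (n-m'+1) i = kap n m' * ev (idx n (m'-1)) i)"
      using Suc.IH[OF m' H' Hd'] by blast
    define T where "T = {n-m'+1..n}"
    define Y where "Y j i = (if j = Suc n then (if i < 2^n then (1 - t) * c * u (Suc n) * lam n m' * ev (idx n m') i
        else (\<Sum>j'\<in>T. sN (Suc n) j' * Y' j' (i - 2^n)))
      else (if i < 2^n then 0 else (e * u (Suc n) + t * f - sN (Suc n) j) * Y' j (i - 2^n)))" for j i
    have Tset: "{Suc n - m + 1..Suc n} = insert (Suc n) T" using m' unfolding Suc T_def by auto
    have N1T: "Suc n \<notin> T" unfolding T_def by auto
    have finT: "finite T" unfolding T_def by simp
    have idxm: "idx (Suc n) m = 2^n + idx n m'" using idx_SucSuc[OF m'] Suc by simp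
    have G1: "(\<Sum>j\<in>{Suc n-m+1..Suc n}. Y j i) = mv (CC (Suc n)) (ev (idx (Suc n) m)) i"
      if i: "i < 2^Suc n" for i
    proof -
      have i2: "i < 2 * 2^n" using i by simp
      have sumsplit: "(\<Sum>j\<in>{Suc n - m + 1..Suc n}. Y j i) = Y (Suc n) i + (\<Sum>j\<in>T. Y j i)"
        unfolding Tset using N1T finT by simp
      show ?thesis
      proof (cases "i < 2^n")
        case True
        have "(\<Sum>j\<in>T. Y j i) = 0" using True N1T unfolding Y_def by (intro sum.neutral) auto
        moreover have "mv (CC n) (ev (2^n + idx n m')) i = 0" by (rule mv_zero') (simp add: ev_high)
        moreover have "mv (AA n) (\<lambda>l. ev (2^n + idx n m') (2^n + l)) i = lam n m' * ev (idx n m') i"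
          unfolding ev_shift using A_eT[OF m' True] .
        ultimately show ?thesis using True i2 unfolding sumsplit idxm mvC_Suc[OF i2]
          by (simp add: Y_def)
      next
        case False
        have i3: "i - 2^n < 2^n" using i2 by simp
        have "(\<Sum>j\<in>T. Y j i) = (\<Sum>j\<in>T. (e * u (Suc n) + t * f - sN (Suc n) j) * Y' j (i - 2^n))"
          using False N1T unfolding Y_def by (intro sum.cong) auto
        moreover have "Y (Suc n) i = (\<Sum>j\<in>T. sN (Suc n) j * Y' j (i - 2^n))"
          using False unfolding Y_def by simp
        moreover have "mv (CC n) (\<lambda>l. ev (2^n + idx n m') (2^n + l)) (i - 2^n) = (\<Sum>j\<in>T. Y' j (i - 2^n))"
          unfolding ev_shift using Y'sum i3 unfolding T_def by simp
        ultimately show ?thesis using False i2 unfolding sumsplit idxm mvC_Suc[OF i2]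
          by (simp add: sum.distrib[symmetric] sum_distrib_left algebra_simps)
      qed
    qed
    have aN: "a * u (Suc n) + b \<noteq> 0" and bN: "e * u (Suc n) + f \<noteq> 0" using Suc.prems(2) by auto
    have Tsub: "j \<in> T \<Longrightarrow> j \<in> {1..n}" for j unfolding T_def by auto
    have bT: "j \<in> T \<Longrightarrow> e * u j + f \<noteq> 0" for j using Tsub[of j] Suc.prems(2) by auto
    have dT: "j \<in> T \<Longrightarrow> (a * u (Suc n) + b) * (e * u j + f) - (e * u (Suc n) + f) * (a * u j + b) \<noteq> 0" for j
    proof -
      assume jT: "j \<in> T"
      have "j \<in> {1..Suc n}" "Suc n \<in> {1..Suc n}" "j \<noteq> Suc n" using Tsub[OF jT] by auto
      thus ?thesis using Suc.prems(3) by blast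
    qed
    have lamS: "lam (Suc n) m = (e * u (Suc n) + f) * lam n m'" using Suc by simp
    have G2T: "mv (AA (Suc n)) (Y j) i = lam (Suc n) m * (a * u j + b) / (e * u j + f) * Y j i"
      if j: "j \<in> T" and i: "i < 2^Suc n" for j i
    proof -
      have i2: "i < 2 * 2^n" using i by simp
      have jn: "j \<noteq> Suc n" using j N1T by auto
      show ?thesis
      proof (cases "i < 2^n")
        case True
        have "mv (AA n) (Y j) i = 0" by (rule mv_zero') (simp add: Y_def jn)
        thus ?thesis using True jn unfolding mvA_Suc[OF i2] by (simp add: Y_def)
      next
        case False
        have i3: "i - 2^n < 2^n" using i2 by simp
        have "mv (CC n) (Y j) (i - 2^n) = 0" by (rule mv_zero') (simp add: Y_def jn)
        moreover have "(\<lambda>l. Y j (2^n + l)) = (\<lambda>l. (e * u (Suc n) + t * f - sN (Suc n) j) * Y' j l)"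
          by (auto simp: Y_def jn)
        moreover have "mv (AA n) (Y' j) (i - 2^n) = lam n m' * (a * u j + b) / (e * u j + f) * Y' j (i - 2^n)"
          using Y'eig j i3 unfolding T_def by blast
        ultimately show ?thesis using False jn unfolding mvA_Suc[OF i2] lamS
          by (simp add: Y_def mv_scale)
      qed
    qed
    have G2N: "mv (AA (Suc n)) (Y (Suc n)) i = lam (Suc n) m * (a * u (Suc n) + b) / (e * u (Suc n) + f) * Y (Suc n) i"
      if i: "i < 2^Suc n" for i
    proof -
      have i2: "i < 2 * 2^n" using i by simp
      have low: "mv X (Y (Suc n)) k = (1 - t) * c * u (Suc n) * lam n m' * mv X (ev (idx n m')) k"
        if "dim_col X = 2^n" for X k
      proof -
        have "mv X (Y (Suc n)) k = mv X (\<lambda>l. (1 - t) * c * u (Suc n) * lam n m' * ev (idx n m') l) k"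
          by (rule mv_cong) (simp add: Y_def that)
        thus ?thesis by (simp add: mv_scale)
      qed
      show ?thesis
      proof (cases "i < 2^n")
        case True
        show ?thesis using True bN unfolding mvA_Suc[OF i2] lamS low[OF AA_dims(2)] A_eT[OF m' True]
          by (simp add: Y_def)
      next
        case False
        have i3: "i - 2^n < 2^n" using i2 by simp
        have hi: "(\<lambda>l. Y (Suc n) (2^n + l)) = (\<lambda>l. \<Sum>j\<in>T. sN (Suc n) j * Y' j l)"
          by (auto simp: Y_def)
        have "mv (AA n) (\<lambda>l. Y (Suc n) (2^n + l)) (i - 2^n)
            = (\<Sum>j\<in>T. sN (Suc n) j * (lam n m' * (a * u j + b) / (e * u j + f) * Y' j (i - 2^n)))"
          unfolding hi mv_sum mv_scale using Y'eig i3 unfolding T_def by simp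
        moreover have "mv (CC n) (ev (idx n m')) (i - 2^n) = (\<Sum>j\<in>T. Y' j (i - 2^n))"
          using Y'sum i3 unfolding T_def by simp
        moreover have "(1 - t) * d * ((1 - t) * c * u (Suc n) * lam n m' * (\<Sum>j\<in>T. Y' j (i - 2^n)))
            + (e * u (Suc n) + f) * (\<Sum>j\<in>T. sN (Suc n) j * (lam n m' * (a * u j + b) / (e * u j + f) * Y' j (i - 2^n)))
            = (a * u (Suc n) + b) * lam n m' * (\<Sum>j\<in>T. sN (Suc n) j * Y' j (i - 2^n))"
        proof -
          have "\<And>j. j \<in> T \<Longrightarrow> (1 - t) * d * ((1 - t) * c * u (Suc n) * lam n m' * Y' j (i - 2^n))
            + (e * u (Suc n) + f) * (sN (Suc n) j * (lam n m' * (a * u j + b) / (e * u j + f) * Y' j (i - 2^n)))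
            = (a * u (Suc n) + b) * lam n m' * (sN (Suc n) j * Y' j (i - 2^n))"
          proof -
            fix j assume "j \<in> T"
            from sN_key[OF bT[OF this] dT[OF this]]
            have "(1 - t) * d * ((1 - t) * c * u (Suc n)) + (e * u (Suc n) + f) * (sN (Suc n) j * ((a * u j + b) / (e * u j + f)))
              = (a * u (Suc n) + b) * sN (Suc n) j" .
            hence "((1 - t) * d * ((1 - t) * c * u (Suc n)) + (e * u (Suc n) + f) * (sN (Suc n) j * ((a * u j + b) / (e * u j + f)))) * (lam n m' * Y' j (i - 2^n))
              = ((a * u (Suc n) + b) * sN (Suc n) j) * (lam n m' * Y' j (i - 2^n))" by simp
            thus "(1 - t) * d * ((1 - t) * c * u (Suc n) * lam n m' * Y' j (i - 2^n))
            + (e * u (Suc n) + f) * (sN (Suc n) j * (lam n m' * (a * u j + b) / (e * u j + f) * Y' j (i - 2^n)))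
            = (a * u (Suc n) + b) * lam n m' * (sN (Suc n) j * Y' j (i - 2^n))"
              by (simp add: algebra_simps)
          qed
          hence "(\<Sum>j\<in>T. (1 - t) * d * ((1 - t) * c * u (Suc n) * lam n m' * Y' j (i - 2^n))
            + (e * u (Suc n) + f) * (sN (Suc n) j * (lam n m' * (a * u j + b) / (e * u j + f) * Y' j (i - 2^n))))
            = (\<Sum>j\<in>T. (a * u (Suc n) + b) * lam n m' * (sN (Suc n) j * Y' j (i - 2^n)))"
            by (rule sum.cong[OF refl])
          thus ?thesis by (simp add: sum.distrib sum_distrib_left)
        qed
        ultimately show ?thesis using False bN unfolding mvA_Suc[OF i2] lamS low[OF CC_dims(2)]
          by (simp add: Y_def)
      qed
    qed
    have G3: "Y (Suc n - m + 1) i = kap (Suc n) m * ev (idx (Suc n) (m - 1)) i" if i: "i < 2^Suc n" for i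
    proof (cases m')
      case 0
      have "T = {}" unfolding T_def 0 by simp
      thus ?thesis using Suc 0 by (auto simp: Y_def idx_0 ev_def)
    next
      case (Suc m'')
      have m'': "m'' \<le> n" using m' Suc by simp
      have kk: "Suc n - m + 1 = n - m' + 1" "Suc (Suc n) - m = n - m' + 1" using \<open>m = Suc m'\<close> m' by auto
      have kn: "n - m' + 1 \<noteq> Suc n" using Suc m' by simp
      have ix: "idx (Suc n) (m - 1) = 2^n + idx n (m' - 1)" using idx_SucSuc[OF m''] \<open>m = Suc m'\<close> Suc by simp
      have km: "kap (Suc n) m = (e * u (Suc n) + t * f - sN (Suc n) (n - m' + 1)) * kap n m'"
        using \<open>m = Suc m'\<close> Suc kk by simp
      show ?thesis
      proof (cases "i < 2^n")
        case True
        thus ?thesis unfolding kk ix km using kn by (simp add: Y_def ev_high)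
      next
        case False
        have i3: "i - 2^n < 2^n" using i by simp
        thus ?thesis unfolding kk ix km using kn False Y'kap Suc by (simp add: Y_def ev_shift')
      qed
    qed
    show ?thesis
    proof (intro exI[of _ Y] conjI allI impI ballI)
      show "\<And>i. i < 2^Suc n \<Longrightarrow> (\<Sum>j\<in>{Suc n-m+1..Suc n}. Y j i) = mv (CC (Suc n)) (ev (idx (Suc n) m)) i"
        using G1 by blast
      show "\<And>j i. j \<in> {Suc n-m+1..Suc n} \<Longrightarrow> i < 2^Suc n \<Longrightarrow>
          mv (AA (Suc n)) (Y j) i = lam (Suc n) m * (a * u j + b) / (e * u j + f) * Y j i"
        using G2T G2N unfolding Tset by blast
      show "\<And>i. 1 \<le> m \<Longrightarrow> i < 2^Suc n \<Longrightarrow> Y (Suc n - m + 1) i = kap (Suc n) m * ev (idx (Suc n) (m - 1)) i"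
        using G3 by blast
    qed
  qed
qed

lemma lam_nz: "\<forall>j\<in>{1..n}. a * u j + b \<noteq> 0 \<and> e * u j + f \<noteq> 0 \<Longrightarrow> lam n m \<noteq> 0"
proof (induction n arbitrary: m)
  case 0
  then show ?case by simp
next
  case (Suc n)
  have "\<forall>j\<in>{1..n}. a * u j + b \<noteq> 0 \<and> e * u j + f \<noteq> 0" using Suc.prems by auto
  moreover have "a * u (Suc n) + b \<noteq> 0 \<and> e * u (Suc n) + f \<noteq> 0" using Suc.prems by auto
  ultimately show ?case using Suc.IH by simp
qed

lemma key_step:
  fixes Cs :: "nat \<Rightarrow> complex mat" and N m i :: nat
  assumes H: "\<forall>j\<in>{1..N}. a * u j + b \<noteq> 0 \<and> e * u j + f \<noteq> 0"
    and Hd: "\<forall>j\<in>{1..N}. \<forall>k\<in>{1..N}. j \<noteq> k \<longrightarrow>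
        (a * u k + b) * (e * u j + f) - (e * u k + f) * (a * u j + b) \<noteq> 0"
    and Cs_dim: "\<forall>j\<in>{1..N}. Cs j \<in> carrier_mat (2 ^ N) (2 ^ N)"
    and Cs_sum: "msum (2 ^ N) Cs N = CC N"
    and Cs_A: "\<forall>j\<in>{1..N}. Cs j * AA N = ((e * u j + f) / (a * u j + b)) \<cdot>\<^sub>m (AA N * Cs j)"
    and m: "1 \<le> m" "m \<le> N" and i: "i < 2^N"
  shows "mv (Cs (N - m + 1)) (ev (idx N m)) i = kap N m * ev (idx N (m - 1)) i"
proof -
  obtain Y where Ysum: "\<forall>i<2^N. (\<Sum>j\<in>{N-m+1..N}. Y j i) = mv (CC N) (ev (idx N m)) i"
     and Yeig: "\<forall>j\<in>{N-m+1..N}. \<forall>i<2^N. mv (AA N) (Y j) i = lam N m * (a * u j + b) / (e * u j + f) * Y j i"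
     and Ykap: "\<forall>i<2^N. Y (N-m+1) i = kap N m * ev (idx N (m-1)) i"
    using decomp[OF m(2) H Hd] m(1) by blast
  define T where "T = {N-m+1..N}"
  define J where "J = {1..N::nat}"
  define \<mu> where "\<mu> j = lam N m * (a * u j + b) / (e * u j + f)" for j
  define z where "z j l = mv (Cs j) (ev (idx N m)) l - (if j \<in> T then Y j l else 0)" for j l
  have TJ: "T \<subseteq> J" unfolding T_def J_def by auto
  have lnz: "lam N m \<noteq> 0" using lam_nz[OF H] .
  have Acs: "mv (AA N) (mv (Cs j) (ev (idx N m))) l = \<mu> j * mv (Cs j) (ev (idx N m)) l"
    if j: "j \<in> J" and l: "l < 2^N" for j l
  proof -
    have Cj: "Cs j \<in> carrier_mat (2^N) (2^N)" using Cs_dim j unfolding J_def by auto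
    have aj: "a * u j + b \<noteq> 0" and bj: "e * u j + f \<noteq> 0" using H j unfolding J_def by auto
    have 1: "mv (AA N) (mv (Cs j) (ev (idx N m))) l = mv (AA N * Cs j) (ev (idx N m)) l"
      using Cj l by (simp add: mv_mult)
    have "mv (Cs j * AA N) (ev (idx N m)) l = (e * u j + f) / (a * u j + b) * mv (AA N * Cs j) (ev (idx N m)) l"
      using Cs_A j Cj l unfolding J_def by (simp add: mv_smult)
    moreover have "mv (Cs j * AA N) (ev (idx N m)) l = lam N m * mv (Cs j) (ev (idx N m)) l"
    proof -
      have "mv (Cs j * AA N) (ev (idx N m)) l = mv (Cs j) (mv (AA N) (ev (idx N m))) l"
        using Cj l by (simp add: mv_mult)
      also have "\<dots> = mv (Cs j) (\<lambda>k. lam N m * ev (idx N m) k) l"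
        using Cj A_eT[OF m(2)] by (intro mv_cong) auto
      finally show ?thesis by (simp add: mv_scale)
    qed
    ultimately have "(e * u j + f) / (a * u j + b) * mv (AA N * Cs j) (ev (idx N m)) l
        = lam N m * mv (Cs j) (ev (idx N m)) l" by simp
    hence "mv (AA N * Cs j) (ev (idx N m)) l = \<mu> j * mv (Cs j) (ev (idx N m)) l"
      unfolding \<mu>_def using aj bj by (simp add: field_simps)
    thus ?thesis using 1 by simp
  qed
  have zeig: "\<forall>j\<in>J. \<forall>l<(2::nat)^N. mv (AA N) (z j) l = \<mu> j * z j l"
  proof (intro ballI allI impI)
    fix j and l :: nat assume j: "j \<in> J" and l: "l < 2^N"
    have "mv (AA N) (z j) l = mv (AA N) (mv (Cs j) (ev (idx N m))) l
        - mv (AA N) (\<lambda>k. if j \<in> T then Y j k else 0) l"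
      unfolding z_def by (rule mv_diff)
    also have "mv (AA N) (\<lambda>k. if j \<in> T then Y j k else 0) l = (if j \<in> T then \<mu> j * Y j l else 0)"
      using Yeig l unfolding T_def \<mu>_def by (cases "j \<in> {N-m+1..N}") (auto simp: mv_zero)
    finally have X: "mv (AA N) (z j) l = mv (AA N) (mv (Cs j) (ev (idx N m))) l - (if j \<in> T then \<mu> j * Y j l else 0)" .
    have zl: "z j l = mv (Cs j) (ev (idx N m)) l - (if j \<in> T then Y j l else 0)" by (simp add: z_def)
    show "mv (AA N) (z j) l = \<mu> j * z j l"
      unfolding X zl Acs[OF j l] by (simp add: algebra_simps)
  qed
  have zsum: "\<forall>l<(2::nat)^N. (\<Sum>j\<in>J. z j l) = 0"
  proof (intro allI impI)
    fix l :: nat assume l: "l < 2^N"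
    have "(\<Sum>j\<in>J. z j l) = (\<Sum>j\<in>J. mv (Cs j) (ev (idx N m)) l) - (\<Sum>j\<in>J. if j \<in> T then Y j l else 0)"
      unfolding z_def by (simp add: sum_subtractf)
    also have "(\<Sum>j\<in>J. if j \<in> T then Y j l else 0) = (\<Sum>j\<in>T. Y j l)"
      using TJ unfolding J_def by (simp add: sum.If_cases Int_absorb1)
    also have "(\<Sum>j\<in>J. mv (Cs j) (ev (idx N m)) l) = mv (CC N) (ev (idx N m)) l"
      using msum_mv[OF Cs_dim le_refl, of "ev (idx N m)"] l Cs_sum unfolding J_def by simp
    finally show "(\<Sum>j\<in>J. z j l) = 0" using Ysum l unfolding T_def by simp
  qed
  have inj: "inj_on \<mu> J"
  proof (rule inj_onI)
    fix j k assume j: "j \<in> J" and k: "k \<in> J" and eq: "\<mu> j = \<mu> k"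
    show "j = k"
    proof (rule ccontr)
      assume jk: "j \<noteq> k"
      have bj: "e * u j + f \<noteq> 0" and bk: "e * u k + f \<noteq> 0" using H j k unfolding J_def by auto
      have "(a * u k + b) * (e * u j + f) - (e * u k + f) * (a * u j + b) \<noteq> 0"
        using Hd j k jk unfolding J_def by blast
      moreover have "(a * u j + b) / (e * u j + f) = (a * u k + b) / (e * u k + f)"
      proof -
        have "lam N m * ((a * u j + b) / (e * u j + f)) = lam N m * ((a * u k + b) / (e * u k + f))"
          using eq unfolding \<mu>_def by (simp only: times_divide_eq_right)
        thus ?thesis using lnz mult_left_cancel by blast
      qed
      hence "(a * u k + b) * (e * u j + f) - (e * u k + f) * (a * u j + b) = 0"
        using bj bk by (simp add: field_simps)
      ultimately show False by simp
    qed
  qed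
  have "\<forall>j\<in>J. \<forall>l<(2::nat)^N. z j l = 0"
    by (rule eig_indep[OF _ inj AA_dims(2) zeig zsum]) (simp add: J_def)
  moreover have "N - m + 1 \<in> J" "N - m + 1 \<in> T" using m unfolding J_def T_def by auto
  ultimately have "mv (Cs (N - m + 1)) (ev (idx N m)) i = Y (N - m + 1) i"
    using i unfolding z_def by auto
  thus ?thesis using Ykap i by simp
qed

lemma chain:
  fixes Cs :: "nat \<Rightarrow> complex mat" and N k :: nat
  assumes H: "\<forall>j\<in>{1..N}. a * u j + b \<noteq> 0 \<and> e * u j + f \<noteq> 0"
    and Hd: "\<forall>j\<in>{1..N}. \<forall>k\<in>{1..N}. j \<noteq> k \<longrightarrow>
        (a * u k + b) * (e * u j + f) - (e * u k + f) * (a * u j + b) \<noteq> 0"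
    and Cs_dim: "\<forall>j\<in>{1..N}. Cs j \<in> carrier_mat (2 ^ N) (2 ^ N)"
    and Cs_sum: "msum (2 ^ N) Cs N = CC N"
    and Cs_A: "\<forall>j\<in>{1..N}. Cs j * AA N = ((e * u j + f) / (a * u j + b)) \<cdot>\<^sub>m (AA N * Cs j)"
    and k: "k \<le> N"
  shows "\<forall>i<(2::nat)^N. mv (mprodrev (2^N) Cs k) (ev (idx N N)) i
      = (\<Prod>l=1..k. kap N (N - l + 1)) * ev (idx N (N - k)) i"
  using k
proof (induction k)
  case 0
  then show ?case by (simp add: mv_one)
next
  case (Suc k)
  have k: "k \<le> N" and kN: "k < N" using Suc.prems by auto
  have C: "Cs (Suc k) \<in> carrier_mat (2^N) (2^N)" using Cs_dim Suc.prems by auto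
  have P: "mprodrev (2^N) Cs k \<in> carrier_mat (2^N) (2^N)" using mprodrev_carrier[OF Cs_dim k] .
  show ?case
  proof (intro allI impI)
    fix i :: nat assume i: "i < 2^N"
    have "mv (mprodrev (2^N) Cs (Suc k)) (ev (idx N N)) i
        = mv (Cs (Suc k)) (mv (mprodrev (2^N) Cs k) (ev (idx N N))) i"
      using C P i by (simp add: mv_mult)
    also have "\<dots> = mv (Cs (Suc k)) (\<lambda>l. (\<Prod>l=1..k. kap N (N - l + 1)) * ev (idx N (N - k)) l) i"
      using Suc.IH[OF k] C by (intro mv_cong) auto
    also have "\<dots> = (\<Prod>l=1..k. kap N (N - l + 1)) * mv (Cs (N - (N - k) + 1)) (ev (idx N (N - k))) i"
      using kN by (simp add: mv_scale Suc_diff_le)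
    also have "\<dots> = (\<Prod>l=1..k. kap N (N - l + 1)) * (kap N (N - k) * ev (idx N (N - k - 1)) i)"
      using key_step[OF H Hd Cs_dim Cs_sum Cs_A _ _ i, of "N - k"] kN by simp
    finally show "mv (mprodrev (2^N) Cs (Suc k)) (ev (idx N N)) i
      = (\<Prod>l=1..Suc k. kap N (N - l + 1)) * ev (idx N (N - Suc k)) i"
      using kN by (simp add: Suc_diff_le Suc_diff_Suc[symmetric])
  qed
qed

lemma A_row0: "l < 2^n \<Longrightarrow> AA n $$ (0, l) = (if l = 0 then lam n 0 else 0)"
proof (induction n arbitrary: l)
  case 0
  then show ?case by (simp add: Amat_def)
next
  case (Suc n)
  have l2: "l < 2 * 2^n" using Suc.prems by simp
  show ?case
  proof (cases "l < 2^n")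
    case True
    thus ?thesis using Suc.IH[OF True] l2
      unfolding AC_Suc by (simp add: kron_index)
  next
    case False
    hence "l div 2^n = 1" "l \<noteq> 0" using l2 div_mod_block[OF l2] by auto
    thus ?thesis using l2 unfolding AC_Suc by (simp add: kron_index)
  qed
qed

lemma Apow_row0: "l < 2^n \<Longrightarrow> (AA n ^\<^sub>m k) $$ (0, l) = (if l = 0 then lam n 0 ^ k else 0)"
proof (induction k arbitrary: l)
  case 0
  then show ?case by simp
next
  case (Suc k)
  have "(AA n ^\<^sub>m Suc k) $$ (0, l) = (\<Sum>r\<in>{0..<(2::nat)^n}. (AA n ^\<^sub>m k) $$ (0, r) * AA n $$ (r, l))"
    using Suc.prems by (simp add: scalar_prod_def AA_carrier)
  also have "\<dots> = (\<Sum>r\<in>{0..<(2::nat)^n}. if r = 0 then lam n 0 ^ k * AA n $$ (0, l) else 0)"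
    using Suc.IH by (intro sum.cong) auto
  also have "\<dots> = lam n 0 ^ k * AA n $$ (0, l)" by simp
  finally show ?case using A_row0[OF Suc.prems] by simp
qed

lemma lam_prod: "lam n 0 = (\<Prod>j=1..n. a * u j + b)"
  by (induction n) auto

lemma sN_simpl:
  assumes rel1: "c * d + a * f = 0" and rel2: "t * c * d + b * e = 0"
    and "c \<noteq> 0" "d \<noteq> 0" "t \<noteq> 1" "u j \<noteq> u N"
  shows "e * u N + t * f - sN N j = (e * u N + f) * ((t * u j - u N) / (u j - u N))"
proof -
  have "(a * u N + b) * (e * u j + f) - (e * u N + f) * (a * u j + b) = (a * f - b * e) * (u N - u j)"
    by (simp add: algebra_simps)
  also have "a * f - b * e = c * d * (t - 1)" using rel1 rel2
    by (simp add: algebra_simps eq_neg_iff_add_eq_0 add.commute)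
      (metis add_eq_0_iff mult.assoc mult.commute)
  finally have den: "(a * u N + b) * (e * u j + f) - (e * u N + f) * (a * u j + b) = c * d * (t - 1) * (u N - u j)" .
  have gen: "e * y + t * f - (1 - t) * d * ((1 - t) * c * y) * (e * x + f) / (c * d * (t - 1) * (y - x))
      = (e * y + f) * ((t * x - y) / (x - y))" if "x \<noteq> y" for x y :: complex
  proof -
    have xy: "x - y \<noteq> 0" "y - x \<noteq> 0" "t - 1 \<noteq> 0" using that assms(5) by auto
    have "(1 - t) * d * ((1 - t) * c * y) * (e * x + f) / (c * d * (t - 1) * (y - x))
        = (t - 1) * y * (e * x + f) / (y - x)"
    proof -
      have K: "c * d * (t - 1) \<noteq> 0" using xy assms(3,4) by simp
      have num: "(1 - t) * d * ((1 - t) * c * y) * (e * x + f) = (c * d * (t - 1)) * ((t - 1) * y * (e * x + f))"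
      proof -
        have h: "1 - t = - (t - 1)" by simp
        have h2: "(1 - t) * (1 - t) = (t - 1) * (t - 1)" by (simp add: algebra_simps)
        show ?thesis using h2 by (simp add: mult_ac)
      qed
      show ?thesis unfolding num by (rule mult_divide_mult_cancel_left[OF K])
    qed
    hence "e * y + t * f - (1 - t) * d * ((1 - t) * c * y) * (e * x + f) / (c * d * (t - 1) * (y - x))
        = ((e * y + t * f) * (y - x) - (t - 1) * y * (e * x + f)) / (y - x)"
      using xy by (simp add: field_simps)
    also have "(e * y + t * f) * (y - x) - (t - 1) * y * (e * x + f) = (e * y + f) * (t * x - y) * (-1)"
      by (simp add: algebra_simps)
    also have "(e * y + f) * (t * x - y) * (-1) / (y - x) = (e * y + f) * ((t * x - y) / (x - y))"
      using xy by (simp add: field_simps)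
    finally show ?thesis .
  qed
  show ?thesis unfolding sN_def den using gen[of "u j" "u N"] assms(6) by simp
qed

lemma F_closed:
  assumes R: "\<forall>j\<in>{1..n}. \<forall>k\<in>{1..n}. j < k \<longrightarrow>
      e * u k + t * f - sN k j = (e * u k + f) * ((t * u j - u k) / (u j - u k))"
  shows "(\<Prod>l=1..n. kap n (n - l + 1)) = (\<Prod>j=1..n. (1 - t) * c * u j * (a * u j + b) ^ (n - j) * (e * u j + f) ^ (j - 1))
     * (\<Prod>j=1..n. \<Prod>k\<in>{j<..n}. (t * u j - u k) / (u j - u k))"
  using R
proof (induction n)
  case 0
  then show ?case by simp
next
  case (Suc n)
  define \<rho> where "\<rho> j k = (t * u j - u k) / (u j - u k)" for j k
  define \<beta> where "\<beta> = e * u (Suc n) + f"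
  have IH: "(\<Prod>l=1..n. kap n (n - l + 1)) = (\<Prod>j=1..n. (1 - t) * c * u j * (a * u j + b) ^ (n - j) * (e * u j + f) ^ (j - 1))
     * (\<Prod>j=1..n. \<Prod>k\<in>{j<..n}. \<rho> j k)"
    using Suc.IH Suc.prems unfolding \<rho>_def by auto
  have L2: "kap (Suc n) (Suc n - l + 1) = (\<beta> * \<rho> l (Suc n)) * kap n (n - l + 1)" if l: "l \<in> {1..n}" for l
  proof -
    have m: "Suc n - l + 1 = Suc (Suc (n - l))" "Suc (Suc n) - (Suc n - l + 1) = l" using l by auto
    have "e * u (Suc n) + t * f - sN (Suc n) l = \<beta> * \<rho> l (Suc n)"
      using Suc.prems l unfolding \<beta>_def \<rho>_def by auto
    thus ?thesis unfolding m(1) using m(2) l by (simp add: Suc_diff_le)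
  qed
  have A1: "(\<Prod>l=1..Suc n. kap (Suc n) (Suc n - l + 1)) = (\<Prod>l=1..n. kap (Suc n) (Suc n - l + 1)) * kap (Suc n) 1"
    by simp
  have A2: "(\<Prod>l=1..n. kap (Suc n) (Suc n - l + 1)) = (\<Prod>l=1..n. (\<beta> * \<rho> l (Suc n)) * kap n (n - l + 1))"
    by (rule prod.cong[OF refl L2])
  have A3: "(\<Prod>l=1..n. (\<beta> * \<rho> l (Suc n)) * kap n (n - l + 1))
      = \<beta> ^ n * (\<Prod>l=1..n. \<rho> l (Suc n)) * (\<Prod>l=1..n. kap n (n - l + 1))"
    by (simp add: prod.distrib)
  have A4: "kap (Suc n) 1 = (1 - t) * c * u (Suc n) * (\<Prod>j=1..n. a * u j + b)" by (simp add: lam_prod)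
  have LHS: "(\<Prod>l=1..Suc n. kap (Suc n) (Suc n - l + 1)) =
    \<beta> ^ n * (\<Prod>l=1..n. \<rho> l (Suc n)) * ((\<Prod>j=1..n. (1 - t) * c * u j * (a * u j + b) ^ (n - j) * (e * u j + f) ^ (j - 1))
     * (\<Prod>j=1..n. \<Prod>k\<in>{j<..n}. \<rho> j k)) * ((1 - t) * c * u (Suc n) * (\<Prod>j=1..n. a * u j + b))"
    unfolding A1 A2 A3 A4 IH ..
  have R1: "(\<Prod>j=1..Suc n. (1 - t) * c * u j * (a * u j + b) ^ (Suc n - j) * (e * u j + f) ^ (j - 1))
     = (\<Prod>j=1..n. (1 - t) * c * u j * (a * u j + b) ^ (n - j) * (e * u j + f) ^ (j - 1)) * (\<Prod>j=1..n. a * u j + b)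
       * ((1 - t) * c * u (Suc n) * \<beta> ^ n)"
  proof -
    have "(\<Prod>j=1..n. (1 - t) * c * u j * (a * u j + b) ^ (Suc n - j) * (e * u j + f) ^ (j - 1))
      = (\<Prod>j=1..n. ((1 - t) * c * u j * (a * u j + b) ^ (n - j) * (e * u j + f) ^ (j - 1)) * (a * u j + b))"
      by (intro prod.cong) (auto simp: Suc_diff_le)
    also have "\<dots> = (\<Prod>j=1..n. (1 - t) * c * u j * (a * u j + b) ^ (n - j) * (e * u j + f) ^ (j - 1)) * (\<Prod>j=1..n. a * u j + b)"
      by (rule prod.distrib)
    finally have X: "(\<Prod>j=1..n. (1 - t) * c * u j * (a * u j + b) ^ (Suc n - j) * (e * u j + f) ^ (j - 1)) =
       (\<Prod>j=1..n. (1 - t) * c * u j * (a * u j + b) ^ (n - j) * (e * u j + f) ^ (j - 1)) * (\<Prod>j=1..n. a * u j + b)" .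
    have "(\<Prod>j=1..Suc n. (1 - t) * c * u j * (a * u j + b) ^ (Suc n - j) * (e * u j + f) ^ (j - 1))
      = (\<Prod>j=1..n. (1 - t) * c * u j * (a * u j + b) ^ (Suc n - j) * (e * u j + f) ^ (j - 1))
        * ((1 - t) * c * u (Suc n) * (a * u (Suc n) + b) ^ (Suc n - Suc n) * (e * u (Suc n) + f) ^ (Suc n - 1))"
      by (simp only: prod.cl_ivl_Suc) simp
    also have "\<dots> = (\<Prod>j=1..n. (1 - t) * c * u j * (a * u j + b) ^ (n - j) * (e * u j + f) ^ (j - 1)) * (\<Prod>j=1..n. a * u j + b)
       * ((1 - t) * c * u (Suc n) * \<beta> ^ n)"
      unfolding X \<beta>_def by simp
    finally show ?thesis .
  qed
  have R2: "(\<Prod>j=1..Suc n. \<Prod>k\<in>{j<..Suc n}. \<rho> j k)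
     = (\<Prod>j=1..n. \<Prod>k\<in>{j<..n}. \<rho> j k) * (\<Prod>l=1..n. \<rho> l (Suc n))"
  proof -
    have "(\<Prod>j=1..n. \<Prod>k\<in>{j<..Suc n}. \<rho> j k) = (\<Prod>j=1..n. (\<Prod>k\<in>{j<..n}. \<rho> j k) * \<rho> j (Suc n))"
      by (intro prod.cong) (auto simp: atLeastSucAtMost_greaterThanAtMost[symmetric])
    thus ?thesis by (simp add: prod.distrib)
  qed
  have G: "(\<Prod>l=1..Suc n. kap (Suc n) (Suc n - l + 1)) = (\<Prod>j=1..Suc n. (1 - t) * c * u j * (a * u j + b) ^ (Suc n - j) * (e * u j + f) ^ (j - 1))
     * (\<Prod>j=1..Suc n. \<Prod>k\<in>{j<..Suc n}. \<rho> j k)"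
    unfolding LHS R1 R2 by (simp only: mult_ac)
  show ?case using G unfolding \<rho>_def .
qed

end

lemma pointwise_alg:
  fixes \<alpha> \<beta> \<delta> :: complex
  assumes "1 \<le> j" "j \<le> N" "N \<le> M" "\<beta> \<noteq> 0"
  shows "(\<alpha> / \<beta>) ^ j * \<alpha> ^ (M - N) * (\<delta> * \<alpha> ^ (N - j) * \<beta> ^ (j - 1)) = \<delta> * \<alpha> ^ M / \<beta>"
proof -
  have M: "M = j + (M - N) + (N - j)" using assms by simp
  have aM: "\<alpha> ^ M = \<alpha> ^ j * \<alpha> ^ (M - N) * \<alpha> ^ (N - j)"
    by (subst M) (simp add: power_add)
  have bj: "\<beta> ^ j = \<beta> ^ (j - 1) * \<beta>" using assms(1)
    by (metis Suc_diff_le diff_Suc_1 power_Suc2)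
  show ?thesis unfolding aM using assms(4)
    by (simp add: power_divide bj field_simps)
qed

theorem mainTheorem4:
  fixes t a b c d e f :: complex and u :: "nat \<Rightarrow> complex" and N M :: nat
    and Cs :: "nat \<Rightarrow> complex mat"
  assumes nz: "a \<noteq> 0" "b \<noteq> 0" "c \<noteq> 0" "d \<noteq> 0" "e \<noteq> 0" "f \<noteq> 0" "t \<noteq> 0"
    and t1: "t \<noteq> 1"
    and rel1: "c * d + a * f = 0" and rel2: "t * c * d + b * e = 0"
    and NM: "1 \<le> N" "N \<le> M"
    and distinct: "inj_on u {1..N}"
    and nzA: "\<forall>j\<in>{1..N}. a * u j + b \<noteq> 0"
    and nzE: "\<forall>j\<in>{1..N}. e * u j + f \<noteq> 0"
    and tu: "\<forall>j\<in>{1..N}. \<forall>k\<in>{1..N}. j \<noteq> k \<longrightarrow> t * u j \<noteq> u k"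
    and Cs_dim: "\<forall>j\<in>{1..N}. Cs j \<in> carrier_mat (2 ^ N) (2 ^ N)"
    and Cs_sum: "msum (2 ^ N) Cs N = Cmat t a b c d e f u N"
    and Cs_A: "\<forall>j\<in>{1..N}. Cs j * Amat t a b c d e f u N
        = ((e * u j + f) / (a * u j + b)) \<cdot>\<^sub>m (Amat t a b c d e f u N * Cs j)"
    and Cs_sq: "\<forall>j\<in>{1..N}. Cs j * Cs j = 0\<^sub>m (2 ^ N) (2 ^ N)"
    and Cs_comm: "\<forall>j\<in>{1..N}. \<forall>k\<in>{1..N}. k \<noteq> j \<longrightarrow> Cs j * Cs k
        = ((e * u j + f) * (a * u k + b) * (u j - t * u k)
            / ((a * u j + b) * (e * u k + f) * (t * u j - u k))) \<cdot>\<^sub>m (Cs k * Cs j)"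
  shows "(\<Prod>j=1..N. ((a * u j + b) / (e * u j + f)) ^ j)
      * mtrace (Qmat N * (Amat t a b c d e f u N ^\<^sub>m (M - N)) * mprodrev (2 ^ N) Cs N)
    = (\<Prod>j=1..N. (1 - t) * c * u j * (a * u j + b) ^ M / (e * u j + f))
      * (\<Prod>j=1..N. \<Prod>k\<in>{j<..N}. (t * u j - u k) / (u j - u k))"
proof -
  have H: "\<forall>j\<in>{1..N}. a * u j + b \<noteq> 0 \<and> e * u j + f \<noteq> 0" using nzA nzE by auto
  have afbe: "a * f - b * e = c * d * (t - 1)" using rel1 rel2
    by (simp add: algebra_simps eq_neg_iff_add_eq_0 add.commute)
      (metis add_eq_0_iff mult.assoc mult.commute)
  have Hd: "\<forall>j\<in>{1..N}. \<forall>k\<in>{1..N}. j \<noteq> k \<longrightarrow>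
        (a * u k + b) * (e * u j + f) - (e * u k + f) * (a * u j + b) \<noteq> 0"
  proof (intro ballI impI)
    fix j k assume j: "j \<in> {1..N}" and k: "k \<in> {1..N}" and jk: "j \<noteq> k"
    have uk: "u k - u j \<noteq> 0"
    proof
      assume "u k - u j = 0"
      hence "k = j" using inj_onD[OF distinct _ k j] by simp
      thus False using jk by simp
    qed
    have "(a * u k + b) * (e * u j + f) - (e * u k + f) * (a * u j + b) = (a * f - b * e) * (u k - u j)"
      by (simp add: algebra_simps)
    also have "\<dots> = c * d * (t - 1) * (u k - u j)" unfolding afbe ..
    finally show "(a * u k + b) * (e * u j + f) - (e * u k + f) * (a * u j + b) \<noteq> 0"
      using uk nz(3,4) t1 by simp
  qed
  have R: "\<forall>j\<in>{1..N}. \<forall>k\<in>{1..N}. j < k \<longrightarrow>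
      e * u k + t * f - sN t a b c d e f u k j = (e * u k + f) * ((t * u j - u k) / (u j - u k))"
  proof (intro ballI impI)
    fix j k assume j: "j \<in> {1..N}" and k: "k \<in> {1..N}" and jk: "j < k"
    have "u j \<noteq> u k"
    proof
      assume "u j = u k"
      hence "j = k" using inj_onD[OF distinct _ j k] by simp
      thus False using jk by simp
    qed
    thus "e * u k + t * f - sN t a b c d e f u k j = (e * u k + f) * ((t * u j - u k) / (u j - u k))"
      using sN_simpl[OF rel1 rel2 nz(3,4) t1] by blast
  qed
  define X where "X = mprodrev (2 ^ N) Cs N"
  define B where "B = Amat t a b c d e f u N ^\<^sub>m (M - N)"
  have Xc: "X \<in> carrier_mat (2^N) (2^N)" unfolding X_def using mprodrev_carrier[OF Cs_dim le_refl] .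
  have Bc: "B \<in> carrier_mat (2^N) (2^N)" unfolding B_def using AA_carrier by (rule pow_carrier_mat)
  have tr: "mtrace (Qmat N * B * X) = lam a b e f u N 0 ^ (M - N) * X $$ (0, 2^N - 1)"
  proof -
    have "mtrace (Qmat N * B * X) = (\<Sum>r<2^N. B $$ (0, r) * X $$ (r, 2^N - 1))"
      using trace_Q[OF Bc Xc] .
    also have "\<dots> = (\<Sum>r<(2::nat)^N. if r = 0 then lam a b e f u N 0 ^ (M - N) * X $$ (0, 2^N - 1) else 0)"
      unfolding B_def by (intro sum.cong) (auto simp: Apow_row0)
    finally show ?thesis by simp
  qed
  have X0: "X $$ (0, 2^N - 1) = (\<Prod>l=1..N. kap t a b c d e f u N (N - l + 1))"
  proof -
    have "X $$ (0, 2^N - 1) = mv X (ev (idx N N)) 0"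
      using Xc by (simp add: mv_ev idx_def)
    also have "\<dots> = (\<Prod>l=1..N. kap t a b c d e f u N (N - l + 1)) * ev (idx N (N - N)) 0"
      unfolding X_def using chain[OF H Hd Cs_dim Cs_sum Cs_A le_refl] by simp
    finally show ?thesis by (simp add: idx_0 ev_def)
  qed
  have main: "mtrace (Qmat N * (Amat t a b c d e f u N ^\<^sub>m (M - N)) * mprodrev (2 ^ N) Cs N)
     = (\<Prod>j=1..N. a * u j + b) ^ (M - N) * ((\<Prod>j=1..N. (1 - t) * c * u j * (a * u j + b) ^ (N - j) * (e * u j + f) ^ (j - 1))
     * (\<Prod>j=1..N. \<Prod>k\<in>{j<..N}. (t * u j - u k) / (u j - u k)))"
  proof -
    have "mtrace (Qmat N * B * X)
     = (\<Prod>j=1..N. a * u j + b) ^ (M - N) * ((\<Prod>j=1..N. (1 - t) * c * u j * (a * u j + b) ^ (N - j) * (e * u j + f) ^ (j - 1))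
     * (\<Prod>j=1..N. \<Prod>k\<in>{j<..N}. (t * u j - u k) / (u j - u k)))"
      unfolding tr X0 F_closed[OF R] lam_prod ..
    thus ?thesis unfolding X_def B_def .
  qed
  have "(\<Prod>j=1..N. ((a * u j + b) / (e * u j + f)) ^ j) * ((\<Prod>j=1..N. a * u j + b) ^ (M - N)
      * (\<Prod>j=1..N. (1 - t) * c * u j * (a * u j + b) ^ (N - j) * (e * u j + f) ^ (j - 1)))
    = (\<Prod>j=1..N. ((a * u j + b) / (e * u j + f)) ^ j * (a * u j + b) ^ (M - N)
      * ((1 - t) * c * u j * (a * u j + b) ^ (N - j) * (e * u j + f) ^ (j - 1)))"
    by (simp add: prod.distrib prod_power_distrib)
  also have "\<dots> = (\<Prod>j=1..N. (1 - t) * c * u j * (a * u j + b) ^ M / (e * u j + f))"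
    using pointwise_alg NM nzE by (intro prod.cong) auto
  finally have P: "(\<Prod>j=1..N. ((a * u j + b) / (e * u j + f)) ^ j) * ((\<Prod>j=1..N. a * u j + b) ^ (M - N)
      * (\<Prod>j=1..N. (1 - t) * c * u j * (a * u j + b) ^ (N - j) * (e * u j + f) ^ (j - 1)))
    = (\<Prod>j=1..N. (1 - t) * c * u j * (a * u j + b) ^ M / (e * u j + f))" .
  show ?thesis unfolding main using P by (simp add: mult.assoc)
qed

end
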